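(* Let $X$ be a topological vector space, $Z$ a locally convex topological vector space, $C\subseteq Z$ a nonempty closed convex cone with $C^-\neq\{0\}$, $x_0\in X$, and $f:X\to\mathcal{F}(Z,C)$ convex-valued. Assume there is a set $B\subseteq Z^*$ with $\{tz^*\colon t\ge0,\ z^*\in B\}=C^-$ such that \[ \forall z\in Z:\ \sup_{z^*\in B}z^*(z)<\infty\qquad\text{and}\qquad\forall V\in\mathcal{V}(0):\ \inf_{z^*\in B}\sup_{z\in V}[-z^*(z)]>0, \] and such that the scalarizations are upper semicontinuous at $x_0$ uniformly with respect to $B$, i.e. for every $\varepsilon>0$ there is a neighborhood $U$ of $x_0$ such that for all $x\in U$ and all $z^*\in B$: $\varphi_{(f,z^* )}(x)<-1/\varepsilon$ if $\varphi_{(f,z^* )}(x_0)=-\infty$, and $\varphi_{(f,z^* )}(x)<\varphi_{(f,z^* )}(x_0)+\varepsilon$ otherwise. Then $f$ is lower continuous at $x_0$.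
   Context: $\mathcal{F}(Z,C)=\{A\subseteq Z\colon A=\operatorname{cl}(A+C)\}$ (empty set included); $C^-=\{z^*\in Z^*\colon z^*(z)\le0\ \forall z\in C\}$; $\mathcal{V}(0)$ is the system of neighborhoods of $0$ in $Z$. $\varphi_{(f,z^* )}(x)=\inf_{z\in f(x)}(-z^*(z))$, with $\inf\emptyset=+\infty$. $f$ is lower continuous at $x_0$ iff for every $z_0\in f(x_0)$ and every neighborhood $V$ of $z_0$ there is a neighborhood $U$ of $x_0$ with $f(x)\cap V\neq\emptyset$ for all $x\in U$. *)

theory Defs
  imports "HOL-Analysis.Analysis"
begin

definition tvs :: "'a::{real_vector,topological_space} itself \<Rightarrow> bool" where
  "tvs _ \<longleftrightarrow> continuous_on UNIV (\<lambda>p::'a \<times> 'a. fst p + snd p) \<and>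
              continuous_on UNIV (\<lambda>p::real \<times> 'a. fst p *\<^sub>R snd p)"

definition locally_convex_tvs :: "'a::{real_vector,topological_space} itself \<Rightarrow> bool" where
  "locally_convex_tvs T \<longleftrightarrow> tvs T \<and>
     (\<forall>U::'a set. open U \<and> 0 \<in> U \<longrightarrow> (\<exists>V. open V \<and> convex V \<and> 0 \<in> V \<and> V \<subseteq> U))"

definition nbhd :: "'a::topological_space \<Rightarrow> 'a set \<Rightarrow> bool" where
  "nbhd x V \<longleftrightarrow> (\<exists>U. open U \<and> x \<in> U \<and> U \<subseteq> V)"

definition dual_space :: "('a::{real_vector,topological_space} \<Rightarrow> real) set" where
  "dual_space = {l. linear l \<and> continuous_on UNIV l}"

definition neg_dual_cone :: "'a::{real_vector,topological_space} set \<Rightarrow> ('a \<Rightarrow> real) set" where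
  "neg_dual_cone C = {l \<in> dual_space. \<forall>z\<in>C. l z \<le> 0}"

text \<open>F(Z,C) = {A \<subseteq> Z. A = cl(A + C)}, empty set included.\<close>
definition upper_closed_sets :: "'a::{real_vector,topological_space} set \<Rightarrow> 'a set set" where
  "upper_closed_sets C = {A. A = closure {a + c | a c. a \<in> A \<and> c \<in> C}}"

text \<open>Scalarization phi_(f,z*)(x) = inf_{z \<in> f x} (- z*(z)), inf of empty set = +\<infinity>.\<close>
definition scalarization :: "('x \<Rightarrow> 'z set) \<Rightarrow> ('z \<Rightarrow> real) \<Rightarrow> 'x \<Rightarrow> ereal" where
  "scalarization f l x = (INF z\<in>f x. ereal (- l z))"

definition lower_continuous_at ::
    "('x::topological_space \<Rightarrow> 'z::topological_space set) \<Rightarrow> 'x \<Rightarrow> bool" where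
  "lower_continuous_at f x0 \<longleftrightarrow>
     (\<forall>z0\<in>f x0. \<forall>V. nbhd z0 V \<longrightarrow> (\<exists>U. nbhd x0 U \<and> (\<forall>x\<in>U. f x \<inter> V \<noteq> {})))"

end

theory Submission
  imports Defs
begin


lemma hb_ext:
  fixes p :: "'a::real_vector \<Rightarrow> real"
  assumes sub: "\<And>x y. p (x + y) \<le> p x + p y"
    and hom: "\<And>c x. c > 0 \<Longrightarrow> p (c *\<^sub>R x) = c * p x"
    and p0: "p 0 = 0"
  shows "\<exists>g. linear g \<and> (\<forall>x. g x \<le> p x) \<and> g k0 = p k0"
proof -
  define A where "A = {G :: ('a \<times> real) set. subspace G \<and> (\<forall>z\<in>G. snd z \<le> p (fst z)) \<and> (k0, p k0) \<in> G}"
  have neg: "t * p x \<le> p (t *\<^sub>R x)" for t x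
  proof -
    consider "t > 0" | "t = 0" | "t < 0" by linarith
    then show ?thesis
    proof cases
      case 1 then show ?thesis using hom by simp
    next
      case 2 then show ?thesis using p0 by simp
    next
      case 3
      have "0 = p (t *\<^sub>R x + (-t) *\<^sub>R x)" using p0 by (simp add: scaleR_left_distrib[symmetric])
      also have "\<dots> \<le> p (t *\<^sub>R x) + p ((-t) *\<^sub>R x)" by (rule sub)
      also have "p ((-t) *\<^sub>R x) = (-t) * p x" using hom[of "-t" x] 3 by simp
      finally show ?thesis by simp
    qed
  qed
  define G0 where "G0 = span {(k0, p k0)}"
  have G0A: "G0 \<in> A"
  proof -
    have "subspace G0" unfolding G0_def by (rule subspace_span)
    moreover have "(k0, p k0) \<in> G0" unfolding G0_def by (rule span_base) simp
    moreover have "\<forall>z\<in>G0. snd z \<le> p (fst z)" unfolding G0_def span_singleton using neg by auto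
    ultimately show ?thesis unfolding A_def by blast
  qed
  have "\<exists>M\<in>A. \<forall>X\<in>A. M \<subseteq> X \<longrightarrow> X = M"
  proof (rule Zorn_Lemma2, intro ballI)
    fix Ch assume Ch: "Ch \<in> chains A"
    show "\<exists>U\<in>A. \<forall>X\<in>Ch. X \<subseteq> U"
    proof (cases "Ch = {}")
      case True then show ?thesis using G0A by auto
    next
      case False
      have sA: "Ch \<subseteq> A" and ch: "\<And>X Y. X \<in> Ch \<Longrightarrow> Y \<in> Ch \<Longrightarrow> X \<subseteq> Y \<or> Y \<subseteq> X"
        using Ch by (auto simp: chains_def chain_subset_def)
      have "subspace (\<Union>Ch)"
        unfolding subspace_def
      proof (intro conjI ballI allI)
        obtain X where "X \<in> Ch" using False by auto
        then show "0 \<in> \<Union>Ch" using sA unfolding A_def by (auto intro!: subspace_0)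
      next
        fix x y assume "x \<in> \<Union>Ch" "y \<in> \<Union>Ch"
        then obtain X Y where XY: "X \<in> Ch" "Y \<in> Ch" "x \<in> X" "y \<in> Y" by auto
        show "x + y \<in> \<Union>Ch"
        proof (cases "X \<subseteq> Y")
          case True
          then show ?thesis using XY sA unfolding A_def by (auto intro!: subspace_add)
        next
          case False
          then have "Y \<subseteq> X" using ch XY by blast
          then show ?thesis using XY sA unfolding A_def by (auto intro!: subspace_add)
        qed
      next
        fix c x assume "x \<in> \<Union>Ch"
        then obtain X where "X \<in> Ch" "x \<in> X" by auto
        then show "c *\<^sub>R x \<in> \<Union>Ch" using sA unfolding A_def by (auto intro!: subspace_scale)
      qed
      moreover have "\<forall>z\<in>\<Union>Ch. snd z \<le> p (fst z)" using sA unfolding A_def by auto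
      moreover have "(k0, p k0) \<in> \<Union>Ch" using sA False unfolding A_def by auto
      ultimately show ?thesis unfolding A_def by auto
    qed
  qed
  then obtain M where MA: "M \<in> A" and Mmax: "\<And>X. X \<in> A \<Longrightarrow> M \<subseteq> X \<Longrightarrow> X = M" by blast
  have Msub: "subspace M" and Mp: "\<And>y b. (y, b) \<in> M \<Longrightarrow> b \<le> p y" and Mk: "(k0, p k0) \<in> M"
    using MA unfolding A_def by auto
  have Msc: "(c *\<^sub>R y, c * b) \<in> M" if "(y,b) \<in> M" for c y b
    using subspace_scale[OF Msub that, of c] by simp
  have Madd: "(y + y', b + b') \<in> M" if "(y,b) \<in> M" "(y',b') \<in> M" for y y' b b'
    using subspace_add[OF Msub that] by simp
  have total: "\<exists>a. (x, a) \<in> M" for x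
  proof (rule ccontr)
    assume nx: "\<not> (\<exists>a. (x, a) \<in> M)"
    define S where "S = {b - p (y - x) | y b. (y, b) \<in> M}"
    have key: "b - p (y - x) \<le> p (y' + x) - b'" if "(y,b) \<in> M" "(y',b') \<in> M" for y b y' b'
    proof -
      have "b + b' \<le> p (y + y')" using Mp[OF Madd[OF that]] .
      also have "y + y' = (y - x) + (y' + x)" by simp
      also have "p \<dots> \<le> p (y - x) + p (y' + x)" by (rule sub)
      finally show ?thesis by simp
    qed
    have M0: "(0, 0) \<in> M" using subspace_0[OF Msub] by (simp add: zero_prod_def)
    have Sne: "S \<noteq> {}" using M0 unfolding S_def by auto
    have bdd: "bdd_above S" unfolding S_def bdd_above_def using key[OF _ M0] by auto
    define c where "c = Sup S"
    have up: "b - p (y - x) \<le> c" if "(y,b) \<in> M" for y b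
      unfolding c_def by (rule cSup_upper[OF _ bdd]) (use that S_def in auto)
    have lo: "c \<le> p (y + x) - b" if "(y,b) \<in> M" for y b
      unfolding c_def by (rule cSup_least[OF Sne]) (use that key S_def in auto)
    define M' where "M' = span (insert (x, c) M)"
    have "M' \<in> A"
      unfolding A_def
    proof (intro CollectI conjI ballI)
      show "subspace M'" unfolding M'_def by (rule subspace_span)
      show "(k0, p k0) \<in> M'" unfolding M'_def using Mk by (auto intro: span_superset[THEN subsetD])
    next
      fix z assume "z \<in> M'"
      then obtain k where "z - k *\<^sub>R (x, c) \<in> span M" unfolding M'_def span_breakdown_eq by blast
      then have "z - k *\<^sub>R (x, c) \<in> M" using Msub by (metis span_eq_iff)
      then obtain y b where yb: "(y, b) \<in> M" and z: "z = (y + k *\<^sub>R x, b + k * c)"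
        by (cases z) auto
      have "b + k * c \<le> p (y + k *\<^sub>R x)"
      proof -
        consider "k > 0" | "k = 0" | "k < 0" by linarith
        then show ?thesis
        proof cases
          case 1
          have "c \<le> p ((1/k) *\<^sub>R y + x) - (1/k) * b" using lo[OF Msc[OF yb, of "1/k"]] .
          then have "k * c \<le> k * p ((1/k) *\<^sub>R y + x) - b" using 1
            by (simp add: field_simps)
          also have "k * p ((1/k) *\<^sub>R y + x) = p (k *\<^sub>R ((1/k) *\<^sub>R y + x))" using hom 1 by simp
          also have "k *\<^sub>R ((1/k) *\<^sub>R y + x) = y + k *\<^sub>R x" using 1 by (simp add: scaleR_add_right)
          finally show ?thesis by simp
        next
          case 2 then show ?thesis using Mp[OF yb] by simp
        next
          case 3
          define s where "s = -k"
          have s: "s > 0" using 3 s_def by simp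
          have "(1/s) * b - p ((1/s) *\<^sub>R y - x) \<le> c" using up[OF Msc[OF yb, of "1/s"]] .
          then have "b - s * p ((1/s) *\<^sub>R y - x) \<le> s * c" using s
            by (simp add: field_simps)
          also have "s * p ((1/s) *\<^sub>R y - x) = p (s *\<^sub>R ((1/s) *\<^sub>R y - x))" using hom s by simp
          also have "s *\<^sub>R ((1/s) *\<^sub>R y - x) = y + k *\<^sub>R x" using s s_def by (simp add: scaleR_diff_right)
          finally show ?thesis using s_def by simp
        qed
      qed
      then show "snd z \<le> p (fst z)" using z by simp
    qed
    moreover have "M \<subseteq> M'" unfolding M'_def by (meson span_superset subset_insertI subset_trans)
    ultimately have "M' = M" by (rule Mmax)
    moreover have "(x, c) \<in> M'" unfolding M'_def by (auto intro: span_superset[THEN subsetD])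
    ultimately show False using nx by auto
  qed
  have uniq: "a = b" if "(x, a) \<in> M" "(x, b) \<in> M" for x a b
  proof -
    have "(x - x, a - b) \<in> M" "(x - x, b - a) \<in> M"
      using subspace_diff[OF Msub that(1) that(2)] subspace_diff[OF Msub that(2) that(1)] by auto
    then have "a - b \<le> p 0" "b - a \<le> p 0" using Mp by auto
    then show ?thesis using p0 by linarith
  qed
  define g where "g x = (THE a. (x, a) \<in> M)" for x
  have gM: "(x, g x) \<in> M" for x
    unfolding g_def using total[of x] uniq by (metis theI)
  have gu: "g x = a" if "(x, a) \<in> M" for x a using uniq[OF gM that] .
  have "linear g"
  proof (rule linearI)
    fix x y show "g (x + y) = g x + g y" by (rule gu[OF Madd[OF gM gM]])
  next
    fix r x show "g (r *\<^sub>R x) = r *\<^sub>R g x" using gu[OF Msc[OF gM]] by simp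
  qed
  moreover have "\<forall>x. g x \<le> p x" using Mp gM by blast
  moreover have "g k0 = p k0" by (rule gu[OF Mk])
  ultimately show ?thesis by blast
qed



lemma tvs_affine_cont:
  assumes "tvs TYPE('z::{real_vector,topological_space})"
  shows "continuous_on UNIV (\<lambda>z::'z. a *\<^sub>R z + b)"
proof -
  have add: "continuous_on UNIV (\<lambda>p::'z \<times> 'z. fst p + snd p)"
   and mul: "continuous_on UNIV (\<lambda>p::real \<times> 'z. fst p *\<^sub>R snd p)"
    using assms unfolding tvs_def by auto
  have "continuous_on UNIV (\<lambda>z::'z. (a, z))"
    by (intro continuous_on_Pair continuous_on_const continuous_on_id)
  then have "continuous_on UNIV (\<lambda>z::'z. fst (a, z) *\<^sub>R snd (a, z))"
    by (rule continuous_on_compose2[OF mul]) auto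
  then have m: "continuous_on UNIV (\<lambda>z::'z. a *\<^sub>R z)" by simp
  have "continuous_on UNIV (\<lambda>z::'z. (a *\<^sub>R z, b))"
    by (intro continuous_on_Pair continuous_on_const m)
  then have "continuous_on UNIV (\<lambda>z::'z. fst (a *\<^sub>R z, b) + snd (a *\<^sub>R z, b))"
    by (rule continuous_on_compose2[OF add]) auto
  then show ?thesis by simp
qed

lemma tvs_affine_open:
  assumes "tvs TYPE('z::{real_vector,topological_space})" "open (S::'z set)"
  shows "open {z. a *\<^sub>R z + b \<in> S}"
proof -
  have "open ((\<lambda>z::'z. a *\<^sub>R z + b) -` S \<inter> UNIV)"
    using tvs_affine_cont[OF assms(1)] assms(2) continuous_on_open_vimage[OF open_UNIV] by blast
  then show ?thesis by (simp add: vimage_def)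
qed

lemma tvs_ray_cont:
  assumes "tvs TYPE('z::{real_vector,topological_space})"
  shows "continuous_on UNIV (\<lambda>t::real. t *\<^sub>R (x::'z))"
proof -
  have mul: "continuous_on UNIV (\<lambda>p::real \<times> 'z. fst p *\<^sub>R snd p)"
    using assms unfolding tvs_def by auto
  have "continuous_on UNIV (\<lambda>t::real. (t, x))"
    by (intro continuous_on_Pair continuous_on_const continuous_on_id)
  then have "continuous_on UNIV (\<lambda>t::real. fst (t, x) *\<^sub>R snd (t, x))"
    by (rule continuous_on_compose2[OF mul]) auto
  then show ?thesis by simp
qed

lemma tvs_ray_open:
  assumes "tvs TYPE('z::{real_vector,topological_space})" "open (S::'z set)" "t0 *\<^sub>R x \<in> S"
  obtains d where "d > 0" "\<And>t. \<bar>t - t0\<bar> < d \<Longrightarrow> t *\<^sub>R x \<in> S"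
proof -
  have "open ((\<lambda>t::real. t *\<^sub>R x) -` S \<inter> UNIV)"
    using tvs_ray_cont[OF assms(1)] assms(2) continuous_on_open_vimage[OF open_UNIV] by blast
  then have o: "open {t::real. t *\<^sub>R x \<in> S}" by (simp add: vimage_def)
  obtain d where "d > 0" "ball t0 d \<subseteq> {t::real. t *\<^sub>R x \<in> S}"
    using openE[OF o] assms(3) by auto
  moreover have "t *\<^sub>R x \<in> S" if "\<bar>t - t0\<bar> < d" for t
    using calculation(2) that by (auto simp: dist_real_def abs_minus_commute subset_iff)
  ultimately show ?thesis using that by blast
qed

lemma minkowski:
  fixes U :: "'z::{real_vector,topological_space} set"
  assumes tv: "tvs TYPE('z)" and oU: "open U" and cU: "convex U" and U0: "0 \<in> U"
  obtains p :: "'z \<Rightarrow> real" where "\<And>x y. p (x + y) \<le> p x + p y"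
    "\<And>c x. c > 0 \<Longrightarrow> p (c *\<^sub>R x) = c * p x" "p 0 = 0"
    "\<And>x. x \<in> U \<Longrightarrow> p x < 1" "\<And>x. p x < 1 \<Longrightarrow> x \<in> U"
proof -
  define T where "T x = {t::real. 0 < t \<and> (1/t) *\<^sub>R x \<in> U}" for x
  define p where "p x = Inf (T x)" for x
  have ne: "T x \<noteq> {}" for x
  proof -
    have "0 *\<^sub>R x \<in> U" using U0 by simp
    then obtain d where d: "d > 0" "\<And>t. \<bar>t - 0\<bar> < d \<Longrightarrow> t *\<^sub>R x \<in> U"
      using tvs_ray_open[OF tv oU] by metis
    have "(d/2) *\<^sub>R x \<in> U" using d by auto
    then have "2/d \<in> T x" using d unfolding T_def by auto
    then show ?thesis by auto
  qed
  have bdd: "bdd_below (T x)" for x unfolding T_def bdd_below_def by (rule exI[of _ 0]) auto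
  have pnn: "p x \<ge> 0" for x unfolding p_def by (rule cInf_greatest[OF ne]) (auto simp: T_def)
  have upw: "(1/t') *\<^sub>R x \<in> U" if "t \<in> T x" "t \<le> t'" for x t t'
  proof -
    have t: "t > 0" "(1/t) *\<^sub>R x \<in> U" using that unfolding T_def by auto
    have "(t/t') *\<^sub>R ((1/t) *\<^sub>R x) + (1 - t/t') *\<^sub>R 0 \<in> U"
    proof -
      have "t/t' \<ge> 0" "1 - t/t' \<ge> 0" using t that(2) by auto
      then show ?thesis using cU t U0 unfolding convex_def by (metis add_diff_cancel_left'  diff_add_cancel)
    qed
    moreover have "(t/t') *\<^sub>R ((1/t) *\<^sub>R x) = (1/t') *\<^sub>R x" using t by simp
    ultimately show ?thesis by (metis scaleR_zero_right add.right_neutral)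
  qed
  have mem: "(1/s) *\<^sub>R x \<in> U" if hs: "p x < s" for x s
  proof -
    obtain t where "t \<in> T x" "t < s" using cInf_lessD[OF ne[of x]] hs unfolding p_def by auto
    then show ?thesis using upw by auto
  qed
  have lowr: "p x \<le> t" if "t > 0" "(1/t) *\<^sub>R x \<in> U" for x t
    unfolding p_def by (rule cInf_lower[OF _ bdd]) (use that T_def in auto)
  have p0: "p 0 = 0"
  proof -
    have "p 0 \<le> 0" by (rule dense_ge) (use lowr U0 in auto)
    then show ?thesis using pnn[of 0] by simp
  qed
  have hom1: "p (c *\<^sub>R x) \<le> c * p x" if c: "c > 0" for c x
  proof -
    have "p (c *\<^sub>R x) / c \<le> p x"
    proof (rule dense_ge)
      fix s assume s: "p x < s"
      then have "s > 0" using pnn[of x] by simp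
      have "(1/(c * s)) *\<^sub>R (c *\<^sub>R x) = (1/s) *\<^sub>R x" using c by simp
      then have "p (c *\<^sub>R x) \<le> c * s" using lowr[of "c * s" "c *\<^sub>R x"] mem[OF s] c \<open>s>0\<close> by simp
      then show "p (c *\<^sub>R x) / c \<le> s" using c by (simp add: field_simps)
    qed
    then show ?thesis using c by (simp add: field_simps)
  qed
  have hom: "p (c *\<^sub>R x) = c * p x" if c: "c > 0" for c x
  proof -
    have "p x = p ((1/c) *\<^sub>R (c *\<^sub>R x))" using c by simp
    also have "\<dots> \<le> (1/c) * p (c *\<^sub>R x)" using hom1[of "1/c" "c *\<^sub>R x"] c by simp
    finally have "c * p x \<le> p (c *\<^sub>R x)" using c by (simp add: field_simps)
    then show ?thesis using hom1[OF c, of x] by linarith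
  qed
  have sub: "p (x + y) \<le> p x + p y" for x y
  proof -
    have *: "p (x + y) \<le> s + t" if s: "p x < s" and t: "p y < t" for s t
    proof -
      have sp: "s > 0" "t > 0" using pnn[of x] pnn[of y] s t by auto
      have "(s/(s+t)) *\<^sub>R ((1/s) *\<^sub>R x) + (t/(s+t)) *\<^sub>R ((1/t) *\<^sub>R y) \<in> U"
        using cU mem[OF s] mem[OF t] sp unfolding convex_def
        by (metis add_divide_distrib divide_nonneg_nonneg divide_self_if less_eq_real_def add_pos_pos less_irrefl)
      moreover have "(s/(s+t)) *\<^sub>R ((1/s) *\<^sub>R x) + (t/(s+t)) *\<^sub>R ((1/t) *\<^sub>R y) = (1/(s+t)) *\<^sub>R (x + y)"
        using sp by (simp add: scaleR_add_right)
      ultimately show ?thesis using lowr[of "s+t" "x+y"] sp by simp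
    qed
    have "p (x + y) - p y \<le> p x"
    proof (rule dense_ge)
      fix s assume s: "p x < s"
      have "p (x + y) - s \<le> p y" by (rule dense_ge) (use * s in force)
      then show "p (x + y) - p y \<le> s" by simp
    qed
    then show ?thesis by simp
  qed
  have lt1: "p x < 1" if "x \<in> U" for x
  proof -
    have "1 *\<^sub>R x \<in> U" using that by simp
    then obtain d where d: "d > 0" "\<And>t. \<bar>t - 1\<bar> < d \<Longrightarrow> t *\<^sub>R x \<in> U"
      using tvs_ray_open[OF tv oU] by metis
    have "(1 + d/2) *\<^sub>R x \<in> U" using d by auto
    then have "p x \<le> 1/(1 + d/2)" using lowr[of "1/(1+d/2)" x] d by simp
    also have "\<dots> < 1" using d by (simp add: field_simps)
    finally show ?thesis .
  qed
  have inU: "x \<in> U" if "p x < 1" for x using mem[OF that] by simp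
  show ?thesis using that sub hom p0 lt1 inU by blast
qed

lemma separation:
  fixes W A :: "'z::{real_vector,topological_space} set"
  assumes tv: "tvs TYPE('z)" and oW: "open W" and cW: "convex W" and W0: "0 \<in> W"
    and cA: "convex A" and a0: "a0 \<in> A" and disj: "\<And>a w. a \<in> A \<Longrightarrow> w \<in> W \<Longrightarrow> z0 + w \<noteq> a"
  shows "\<exists>g::'z \<Rightarrow> real. linear g \<and> continuous_on UNIV g \<and> (\<forall>a\<in>A. \<forall>w\<in>W. g a < g (z0 + w))"
proof -
  define U where "U = {v. \<exists>a\<in>A. \<exists>w\<in>W. v = a - a0 - w}"
  have U_eq: "U = (\<Union>a\<in>A. {v. (-1) *\<^sub>R v + (a - a0) \<in> W})"
    unfolding U_def by (auto simp: algebra_simps)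
  have oU: "open U" unfolding U_eq by (intro open_UN ballI tvs_affine_open[OF tv oW])
  have U0: "0 \<in> U" unfolding U_def using a0 W0 by force
  have cU: "convex U"
    unfolding convex_def
  proof (intro ballI allI impI)
    fix x y :: 'z and u v :: real
    assume x: "x \<in> U" and y: "y \<in> U" and u: "u \<ge> 0" and v: "v \<ge> 0" and uv: "u + v = 1"
    obtain a w where aw: "a \<in> A" "w \<in> W" "x = a - a0 - w" using x U_def by auto
    obtain a' w' where aw': "a' \<in> A" "w' \<in> W" "y = a' - a0 - w'" using y U_def by auto
    have "u *\<^sub>R a + v *\<^sub>R a' \<in> A" using cA aw aw' u v uv unfolding convex_def by blast
    moreover have "u *\<^sub>R w + v *\<^sub>R w' \<in> W" using cW aw aw' u v uv unfolding convex_def by blast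
    moreover have "u *\<^sub>R x + v *\<^sub>R y = (u *\<^sub>R a + v *\<^sub>R a') - a0 - (u *\<^sub>R w + v *\<^sub>R w')"
    proof -
      have "u *\<^sub>R x + v *\<^sub>R y = (u *\<^sub>R a + v *\<^sub>R a') - (u + v) *\<^sub>R a0 - (u *\<^sub>R w + v *\<^sub>R w')"
        unfolding aw(3) aw'(3) by (simp add: algebra_simps)
      then show ?thesis using uv by simp
    qed
    ultimately show "u *\<^sub>R x + v *\<^sub>R y \<in> U" unfolding U_def by blast
  qed
  define k0 where "k0 = z0 - a0"
  have k0U: "k0 \<notin> U"
  proof
    assume "k0 \<in> U"
    then obtain a w where "a \<in> A" "w \<in> W" "z0 - a0 = a - a0 - w" unfolding U_def k0_def by auto
    moreover then have "z0 + w = a" by (simp add: algebra_simps)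
    ultimately show False using disj by blast
  qed
  obtain p where sub: "\<And>x y. p (x + y) \<le> p x + p y"
    and hom: "\<And>c x. c > 0 \<Longrightarrow> p (c *\<^sub>R x) = c * p x" and p0: "p 0 = 0"
    and lt1: "\<And>x. x \<in> U \<Longrightarrow> p x < 1" and inU: "\<And>x. p x < 1 \<Longrightarrow> x \<in> U"
    using minkowski[OF tv oU cU U0] by metis
  obtain g where lin: "linear g" and gp: "\<And>x. g x \<le> p x" and gk: "g k0 = p k0"
    using hb_ext[of p k0, OF sub hom p0] by blast
  have gk1: "g k0 \<ge> 1" using gk inU k0U by force
  have gU: "g u < 1" if "u \<in> U" for u using gp[of u] lt1[OF that] by simp
  have sep: "g a < g (z0 + w)" if "a \<in> A" "w \<in> W" for a w
  proof -
    have "g (a - a0 - w) < 1" using gU that unfolding U_def by blast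
    then have "g a - g a0 - g w < g z0 - g a0" using gk1 linear_diff[OF lin] unfolding k0_def by simp
    then show ?thesis using linear_add[OF lin] by simp
  qed
  define N where "N = U \<inter> {v. (-1) *\<^sub>R v + 0 \<in> U}"
  have oN: "open N" unfolding N_def by (intro open_Int oU tvs_affine_open[OF tv oU])
  have gN: "\<bar>g v\<bar> < 1" if "v \<in> N" for v
  proof -
    have "g v < 1" "g (- v) < 1" using gU that unfolding N_def by auto
    then show ?thesis using linear_neg[OF lin] by auto
  qed
  have cont: "continuous_on UNIV g"
    unfolding continuous_on_open_vimage[OF open_UNIV]
  proof (intro allI impI)
    fix S :: "real set" assume oS: "open S"
    show "open (g -` S \<inter> UNIV)"
      unfolding open_subopen[of "g -` S \<inter> UNIV"]
    proof (intro ballI)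
      fix y assume "y \<in> g -` S \<inter> UNIV"
      then have "g y \<in> S" by simp
      then obtain e where e: "e > 0" "ball (g y) e \<subseteq> S" using openE[OF oS] by metis
      define T where "T = {z. (1/e) *\<^sub>R z + (- (1/e) *\<^sub>R y) \<in> N}"
      have oT: "open T" unfolding T_def by (rule tvs_affine_open[OF tv oN])
      have yT: "y \<in> T" unfolding T_def N_def using U0 by simp
      have "T \<subseteq> g -` S \<inter> UNIV"
      proof
        fix z assume "z \<in> T"
        then have "\<bar>g ((1/e) *\<^sub>R z + (- (1/e) *\<^sub>R y))\<bar> < 1" using gN unfolding T_def by blast
        then have "\<bar>(1/e) * (g z - g y)\<bar> < 1"
          using linear_add[OF lin] linear_scale[OF lin] linear_diff[OF lin] by (simp add: algebra_simps diff_divide_distrib)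
        then have "\<bar>g z - g y\<bar> < e" using e by (simp add: abs_mult field_simps)
        then have "g z \<in> ball (g y) e" by (simp add: dist_real_def abs_minus_commute)
        then show "z \<in> g -` S \<inter> UNIV" using e by auto
      qed
      then show "\<exists>T. open T \<and> y \<in> T \<and> T \<subseteq> g -` S \<inter> UNIV" using oT yT by blast
    qed
  qed
  show ?thesis using lin cont sep by (intro exI[of _ g]) auto
qed



theorem mainTheorem16:
  fixes f :: "'x::{real_vector,topological_space} \<Rightarrow> 'z::{real_vector,topological_space} set"
    and C :: "'z set" and x0 :: 'x and B :: "('z \<Rightarrow> real) set"
  assumes X_tvs: "tvs TYPE('x)" and Z_lc: "locally_convex_tvs TYPE('z)"
    and C_ne: "C \<noteq> {}" and C_closed: "closed C" and C_convex: "convex C"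
    and C_cone: "cone C"
    and C_neg: "neg_dual_cone C \<noteq> {\<lambda>z. 0}"
    and f_vals: "\<forall>x. f x \<in> upper_closed_sets C"
    and f_convex: "\<forall>x. convex (f x)"
    and B_dual: "B \<subseteq> dual_space"
    and B_gen: "{(\<lambda>z. t * l z) | t l. t \<ge> 0 \<and> l \<in> B} = neg_dual_cone C"
    and B_sup: "\<forall>z. (SUP l\<in>B. ereal (l z)) < \<infinity>"
    and B_inf: "\<forall>V. nbhd 0 V \<longrightarrow> (INF l\<in>B. SUP z\<in>V. ereal (- l z)) > 0"
    and usc_unif: "\<forall>\<epsilon>>0. \<exists>U. nbhd x0 U \<and> (\<forall>x\<in>U. \<forall>l\<in>B.
          (if scalarization f l x0 = -\<infinity>
           then scalarization f l x < ereal (- 1 / \<epsilon>)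
           else scalarization f l x < scalarization f l x0 + ereal \<epsilon>))"
  shows "lower_continuous_at f x0"
  unfolding lower_continuous_at_def
proof (intro ballI allI impI)
  fix z0 V assume z0: "z0 \<in> f x0" and "nbhd z0 V"
  then obtain Ob where Ob: "open Ob" "z0 \<in> Ob" "Ob \<subseteq> V" unfolding nbhd_def by blast
  have tv: "tvs TYPE('z)" using Z_lc unfolding locally_convex_tvs_def by blast
  define Oz where "Oz = {w::'z. 1 *\<^sub>R w + z0 \<in> Ob}"
  have "open Oz" unfolding Oz_def by (rule tvs_affine_open[OF tv Ob(1)])
  moreover have "0 \<in> Oz" unfolding Oz_def using Ob by simp
  ultimately obtain W where W: "open W" "convex W" "0 \<in> W" "W \<subseteq> Oz"
    using Z_lc unfolding locally_convex_tvs_def by blast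
  have zW: "z0 + w \<in> V" if "w \<in> W" for w using W(4) that Ob(3) unfolding Oz_def by (auto simp: add.commute)
  have "nbhd 0 W" unfolding nbhd_def using W by blast
  then have dpos: "(INF l\<in>B. SUP z\<in>W. ereal (- l z)) > 0" using B_inf by blast
  obtain d where d: "0 < ereal d" "ereal d < (INF l\<in>B. SUP z\<in>W. ereal (- l z))"
    using ereal_dense2[OF dpos] by blast
  have d0: "d > 0" using d(1) by simp
  obtain m0 where m0: "(SUP l\<in>B. ereal (l z0)) < ereal m0"
    using ereal_dense2[OF B_sup[rule_format, of z0]] by blast
  define m where "m = max m0 1"
  have m1: "m > 0" unfolding m_def by simp
  have "ereal m0 \<le> ereal m" unfolding m_def by simp
  then have m2: "(SUP l\<in>B. ereal (l z0)) < ereal m" using m0 by (rule order.strict_trans2[rotated])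
  note m = m1 m2
  define \<epsilon> where "\<epsilon> = min d (1/m)"
  have e0: "\<epsilon> > 0" using d0 m unfolding \<epsilon>_def by simp
  have em: "m \<le> 1/\<epsilon>"
  proof -
    have "\<epsilon> \<le> 1/m" unfolding \<epsilon>_def by simp
    then have "\<epsilon> * m \<le> 1" using m1 by (simp add: field_simps)
    then show ?thesis using e0 by (simp add: field_simps)
  qed
  have ed: "\<epsilon> \<le> d" unfolding \<epsilon>_def by simp
  obtain U where U: "nbhd x0 U" and Uu: "\<forall>x\<in>U. \<forall>l\<in>B.
          (if scalarization f l x0 = -\<infinity>
           then scalarization f l x < ereal (- 1 / \<epsilon>)
           else scalarization f l x < scalarization f l x0 + ereal \<epsilon>)"
    using usc_unif[rule_format, OF e0] by blast
  have zero_dual: "(\<lambda>z::'z. 0::real) \<in> neg_dual_cone C"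
    unfolding neg_dual_cone_def dual_space_def by (auto intro: linearI)
  have "(\<lambda>z::'z. 0::real) \<in> {(\<lambda>z. t * l z) | t l. t \<ge> 0 \<and> l \<in> B}" using zero_dual B_gen by simp
  then have Bne: "B \<noteq> {}" by auto
  have main: "f x \<inter> V \<noteq> {}" if xU: "x \<in> U" for x
  proof
    assume disj0: "f x \<inter> V = {}"
    have disj: "z0 + w \<noteq> a" if "a \<in> f x" "w \<in> W" for a w using disj0 zW that by blast
    have key: "\<exists>l\<in>B. ereal (- l z0) + (SUP w\<in>W. ereal (- l w)) \<le> scalarization f l x"
    proof (cases "f x = {}")
      case True
      then show ?thesis using Bne unfolding scalarization_def by auto
    next
      case False
      then obtain a0 where a0: "a0 \<in> f x" by blast
      obtain g :: "'z \<Rightarrow> real" where lin: "linear g" and cont: "continuous_on UNIV g"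
        and sep: "\<And>a w. a \<in> f x \<Longrightarrow> w \<in> W \<Longrightarrow> g a < g (z0 + w)"
        using separation[OF tv W(1,2,3) f_convex[rule_format] a0 disj] by blast
      have upc: "a + c \<in> f x" if "a \<in> f x" "c \<in> C" for a c
      proof -
        define S where "S = {a + c | a c. a \<in> f x \<and> c \<in> C}"
        have eq: "f x = closure S" using f_vals unfolding upper_closed_sets_def S_def by blast
        have "a + c \<in> S" unfolding S_def using that by blast
        then have "a + c \<in> closure S" by (rule closure_subset[THEN subsetD])
        then show ?thesis by (subst eq)
      qed
      have ga: "g a0 < g z0" using sep[OF a0 W(3)] by simp
      have gC: "g c \<le> 0" if c: "c \<in> C" for c
      proof (rule ccontr)
        assume "\<not> g c \<le> 0"
        then have gc: "g c > 0" by simp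
        define t where "t = (g z0 - g a0) / g c + 1"
        have t0: "t \<ge> 0" unfolding t_def using ga gc by (simp add: field_simps)
        have "t *\<^sub>R c \<in> C" using C_cone c t0 unfolding cone_def by blast
        then have "g (a0 + t *\<^sub>R c) < g (z0 + 0)" using sep[OF upc[OF a0] W(3)] by blast
        then have "g a0 + t * g c < g z0" using linear_add[OF lin] linear_scale[OF lin] by simp
        moreover have "g a0 + t * g c = g z0 + g c" unfolding t_def using gc by (simp add: field_simps)
        ultimately show False using gc by simp
      qed
      have "g \<in> neg_dual_cone C" unfolding neg_dual_cone_def dual_space_def using lin cont gC by blast
      then have "g \<in> {(\<lambda>z. t * l z) | t l. t \<ge> 0 \<and> l \<in> B}" using B_gen by simp
      then obtain t l where tl: "g = (\<lambda>z. t * l z)" "t \<ge> 0" "l \<in> B" by blast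
      have "t \<noteq> 0" using ga tl by auto
      then have t0: "t > 0" using tl by simp
      have linl: "linear l" using tl(3) B_dual unfolding dual_space_def by blast
      have lsep: "l a < l z0 + l w" if "a \<in> f x" "w \<in> W" for a w
        using sep[OF that] t0 linear_add[OF linl] unfolding tl(1) by simp
      have "ereal (- l z0) + (SUP w\<in>W. ereal (- l w)) \<le> ereal (- l a)" if a: "a \<in> f x" for a
      proof -
        have "(SUP w\<in>W. ereal (- l w)) \<le> ereal (- l a + l z0)"
        proof (rule SUP_least)
          fix w assume "w \<in> W"
          then have "l a < l z0 + l w" by (rule lsep[OF a])
          then show "ereal (- l w) \<le> ereal (- l a + l z0)" by simp
        qed
        then have "ereal (- l z0) + (SUP w\<in>W. ereal (- l w)) \<le> ereal (- l z0) + ereal (- l a + l z0)"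
          by (rule add_left_mono)
        then show ?thesis by simp
      qed
      then have "ereal (- l z0) + (SUP w\<in>W. ereal (- l w)) \<le> scalarization f l x"
        unfolding scalarization_def by (rule INF_greatest)
      then show ?thesis using tl(3) by blast
    qed
    then obtain l where lB: "l \<in> B" and lx: "ereal (- l z0) + (SUP w\<in>W. ereal (- l w)) \<le> scalarization f l x"
      by blast
    have dl: "ereal d < (SUP w\<in>W. ereal (- l w))"
      using d(2) INF_lower[OF lB, of "\<lambda>l. SUP z\<in>W. ereal (- l z)"] by (rule less_le_trans)
    have phi0: "scalarization f l x0 \<le> ereal (- l z0)"
      unfolding scalarization_def by (rule INF_lower[OF z0])
    have "ereal (l z0) < ereal m" using m(2) SUP_upper[OF lB, of "\<lambda>l. ereal (l z0)"] by (meson le_less_trans)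
    then have lz: "l z0 < 1/\<epsilon>" using em by simp
    show False
    proof (cases "scalarization f l x0 = -\<infinity>")
      case True
      then have "scalarization f l x < ereal (- 1 / \<epsilon>)" using Uu[rule_format, OF xU lB] by simp
      moreover have "ereal (- 1 / \<epsilon>) \<le> ereal (- l z0)" using lz by simp
      moreover have "ereal (- l z0) \<le> ereal (- l z0) + (SUP w\<in>W. ereal (- l w))"
      proof -
        have "0 \<le> (SUP w\<in>W. ereal (- l w))" using dl d(1) by (meson less_trans less_imp_le)
        then show ?thesis using add_left_mono[of 0 _ "ereal (- l z0)"] by simp
      qed
      ultimately show False using lx by (meson not_le order_trans)
    next
      case False
      then have "scalarization f l x < scalarization f l x0 + ereal \<epsilon>" using Uu[rule_format, OF xU lB] by simp
      also have "\<dots> \<le> ereal (- l z0) + ereal \<epsilon>" using phi0 by (rule add_right_mono)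
      also have "\<dots> \<le> ereal (- l z0) + (SUP w\<in>W. ereal (- l w))"
      proof (intro add_left_mono)
        have "ereal \<epsilon> \<le> ereal d" using ed by simp
        then show "ereal \<epsilon> \<le> (SUP w\<in>W. ereal (- l w))" using dl by (meson order_trans less_imp_le)
      qed
      finally show False using lx by (meson not_le)
    qed
  qed
  show "\<exists>U. nbhd x0 U \<and> (\<forall>x\<in>U. f x \<inter> V \<noteq> {})" using U main by blast
qed


end
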